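(* Let $X$ be an $E\mathcal M$-simplicial set. Then $X$ is a $*$-module if and only if $X$ is mild.
   Context: $\omega=\{1,2,3,\dots\}$ and $\mathcal M$ is the monoid of injective maps $\omega\to\omega$ under composition. For $A\subset\omega$, $\mathcal M_A\subset\mathcal M$ is the submonoid of injections fixing $A$ elementwise; $A$ is co-infinite if $\omega\setminus A$ is infinite. $E\mathcal M$ is the simplicial monoid with $(E\mathcal M)_n=\mathcal M^{1+n}=\mathrm{maps}(\{0,\dots,n\},\mathcal M)$, pointwise multiplication, simplicial structure maps by precomposition. An $E\mathcal M$-simplicial set is a simplicial set with a left $E\mathcal M$-action. For a set $S$, $E\mathrm{Inj}(S,\omega)$ is the simplicial set whose $m$-simplices are tuples $(f_0,\dots,f_m)$ of injections $S\to\omega$ (structure maps by precomposition in the index), with left $E\mathcal M$-action by postcomposition. For $x\in X_n$, $A\subset\omega$, $0\le k\le n$, $x$ is $k$-supported on $A$ if $i_k(u).x=x$ for all $u\in\mathcal M_A$, where $i_k\colon\mathcal M\to\mathcal M^{1+n}$ includes into the $(1+k)$-th factor. $X$ is mild if for every $n$, every $x\in X_n$ and every $0\le k\le n$ there is a co-infinite $A\subset\omega$ such that $x$ is $k$-supported on $A$. Operadic product: for $E\mathcal M$-simplicial sets $X_1,\dots,X_n$, let $E\mathrm{Inj}(n\times\omega,\omega)\times_{E\mathcal M^n}X_1\times\dots\times X_n$ be the quotient of $E\mathrm{Inj}(n\times\omega,\omega)\times X_1\times\dots\times X_n$ by the equivalence relation generated on $m$-simplices by $(f_0,\dots,f_m;u_1.x_1,\dots,u_n.x_n)\sim(f_0\circ(u_1^{(0)}\amalg\dots\amalg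 u_n^{(0)}),\dots,f_m\circ(u_1^{(m)}\amalg\dots\amalg u_n^{(m)});x_1,\dots,x_n)$ for all $u_i=(u_i^{(0)},\dots,u_i^{(m)})\in(E\mathcal M)_m$; it carries the $E\mathcal M$-action by postcomposition on the first factor. There is a natural map $\Phi$ to $X_1\times\dots\times X_n$ given on $m$-simplices by $\Phi[f_0,\dots,f_m;x_1,\dots,x_n]=((f_0\iota_1,\dots,f_m\iota_1).x_1,\dots,(f_0\iota_n,\dots,f_m\iota_n).x_n)$, where $\iota_j(t)=(j,t)$. An $E\mathcal M$-simplicial set $X$ is a $*$-module if $\Phi\colon E\mathrm{Inj}(2\times\omega,\omega)\times_{E\mathcal M^2}(X\times * )\to X\times *\cong X$ is an isomorphism ($*$ the terminal $E\mathcal M$-simplicial set). *)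

theory Defs
  imports Main
begin

text \<open>Convention: omega = {1,2,3,...} is modelled by the type nat (a relabelling
  t |-> t-1); a map in M is an injective function nat => nat.
  The standard simplex [n] = {0..n}; a simplicial operator [m] -> [n] is a
  monotone function alpha with alpha i <= n for i <= m (values beyond m irrelevant).\<close>

definition simp_map :: "nat \<Rightarrow> nat \<Rightarrow> (nat \<Rightarrow> nat) \<Rightarrow> bool" where
  "simp_map m n \<alpha> \<longleftrightarrow> (\<forall>i\<le>m. \<alpha> i \<le> n) \<and> (\<forall>i j. i \<le> j \<and> j \<le> m \<longrightarrow> \<alpha> i \<le> \<alpha> j)"

definition simplicial_set :: "(nat \<Rightarrow> 'a set) \<Rightarrow> (nat \<Rightarrow> nat \<Rightarrow> (nat \<Rightarrow> nat) \<Rightarrow> 'a \<Rightarrow> 'a) \<Rightarrow> bool" where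
  "simplicial_set X F \<longleftrightarrow>
     (\<forall>m n \<alpha> x. simp_map m n \<alpha> \<and> x \<in> X n \<longrightarrow> F m n \<alpha> x \<in> X m) \<and>
     (\<forall>n x. x \<in> X n \<longrightarrow> F n n id x = x) \<and>
     (\<forall>k m n \<alpha> \<beta> x. simp_map m n \<alpha> \<and> simp_map k m \<beta> \<and> x \<in> X n \<longrightarrow>
         F k m \<beta> (F m n \<alpha> x) = F k n (\<alpha> \<circ> \<beta>) x) \<and>
     (\<forall>m n \<alpha> \<alpha>' x. simp_map m n \<alpha> \<and> (\<forall>i\<le>m. \<alpha> i = \<alpha>' i) \<and> x \<in> X n \<longrightarrow>
         F m n \<alpha> x = F m n \<alpha>' x)"

text \<open>(E M)_n = M^{1+n}: tuples (u 0, ..., u n) of injections (entries beyond n irrelevant).\<close>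

definition EM :: "nat \<Rightarrow> (nat \<Rightarrow> nat \<Rightarrow> nat) set" where
  "EM n = {u. \<forall>i\<le>n. inj (u i)}"

definition EM_sset :: "(nat \<Rightarrow> 'a set) \<Rightarrow> (nat \<Rightarrow> nat \<Rightarrow> (nat \<Rightarrow> nat) \<Rightarrow> 'a \<Rightarrow> 'a)
    \<Rightarrow> (nat \<Rightarrow> (nat \<Rightarrow> nat \<Rightarrow> nat) \<Rightarrow> 'a \<Rightarrow> 'a) \<Rightarrow> bool" where
  "EM_sset X F act \<longleftrightarrow> simplicial_set X F \<and>
     (\<forall>n u x. u \<in> EM n \<and> x \<in> X n \<longrightarrow> act n u x \<in> X n) \<and>
     (\<forall>n x. x \<in> X n \<longrightarrow> act n (\<lambda>i. id) x = x) \<and>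
     (\<forall>n u v x. u \<in> EM n \<and> v \<in> EM n \<and> x \<in> X n \<longrightarrow>
         act n u (act n v x) = act n (\<lambda>i. u i \<circ> v i) x) \<and>
     (\<forall>n u u' x. u \<in> EM n \<and> (\<forall>i\<le>n. u i = u' i) \<and> x \<in> X n \<longrightarrow> act n u x = act n u' x) \<and>
     (\<forall>m n \<alpha> u x. simp_map m n \<alpha> \<and> u \<in> EM n \<and> x \<in> X n \<longrightarrow>
         F m n \<alpha> (act n u x) = act m (u \<circ> \<alpha>) (F m n \<alpha> x))"

definition k_supported :: "(nat \<Rightarrow> (nat \<Rightarrow> nat \<Rightarrow> nat) \<Rightarrow> 'a \<Rightarrow> 'a) \<Rightarrow> nat \<Rightarrow> nat \<Rightarrow> nat set \<Rightarrow> 'a \<Rightarrow> bool" where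
  "k_supported act n k A x \<longleftrightarrow>
     (\<forall>u. inj u \<and> (\<forall>a\<in>A. u a = a) \<longrightarrow> act n (\<lambda>i. if i = k then u else id) x = x)"

definition mild :: "(nat \<Rightarrow> 'a set) \<Rightarrow> (nat \<Rightarrow> (nat \<Rightarrow> nat \<Rightarrow> nat) \<Rightarrow> 'a \<Rightarrow> 'a) \<Rightarrow> bool" where
  "mild X act \<longleftrightarrow>
     (\<forall>n. \<forall>x\<in>X n. \<forall>k\<le>n. \<exists>A. infinite (UNIV - A) \<and> k_supported act n k A x)"

text \<open>The operadic product E Inj(2 x omega, omega) x_{EM^2} (X x * ), levelwise.
  2 x omega is modelled as {1,2} x nat; * has a single simplex in each degree with
  trivial action, so the * coordinate is omitted.\<close>

definition two_omega :: "(nat \<times> nat) set" where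
  "two_omega = {1, 2} \<times> UNIV"

definition iota :: "nat \<Rightarrow> nat \<Rightarrow> nat \<times> nat" where
  "iota j t = (j, t)"

definition cop :: "(nat \<Rightarrow> nat) \<Rightarrow> (nat \<Rightarrow> nat) \<Rightarrow> nat \<times> nat \<Rightarrow> nat \<times> nat" where
  "cop u1 u2 = (\<lambda>(j, t). if j = 1 then (j, u1 t) else (j, u2 t))"

definition EInj2 :: "nat \<Rightarrow> (nat \<Rightarrow> nat \<times> nat \<Rightarrow> nat) set" where
  "EInj2 m = {f. \<forall>i\<le>m. inj_on (f i) two_omega}"

definition prodX :: "(nat \<Rightarrow> 'a set) \<Rightarrow> nat \<Rightarrow> ((nat \<Rightarrow> nat \<times> nat \<Rightarrow> nat) \<times> 'a) set" where
  "prodX X m = EInj2 m \<times> X m"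

text \<open>Generating relation on m-simplices:
  (f; u1.x, u2.* ) ~ (f o (u1 \<amalg> u2); x, * ), where u2.* = *.\<close>

definition opgen :: "(nat \<Rightarrow> 'a set) \<Rightarrow> (nat \<Rightarrow> (nat \<Rightarrow> nat \<Rightarrow> nat) \<Rightarrow> 'a \<Rightarrow> 'a) \<Rightarrow> nat
    \<Rightarrow> (nat \<Rightarrow> nat \<times> nat \<Rightarrow> nat) \<times> 'a \<Rightarrow> (nat \<Rightarrow> nat \<times> nat \<Rightarrow> nat) \<times> 'a \<Rightarrow> bool" where
  "opgen X act m a b \<longleftrightarrow> a \<in> prodX X m \<and> b \<in> prodX X m \<and>
     (\<exists>u1\<in>EM m. \<exists>u2\<in>EM m. snd a = act m u1 (snd b) \<and>
        (\<forall>i\<le>m. \<forall>p\<in>two_omega. fst b i p = fst a i (cop (u1 i) (u2 i) p)))"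

definition opequiv :: "(nat \<Rightarrow> 'a set) \<Rightarrow> (nat \<Rightarrow> (nat \<Rightarrow> nat \<Rightarrow> nat) \<Rightarrow> 'a \<Rightarrow> 'a) \<Rightarrow> nat
    \<Rightarrow> ((nat \<Rightarrow> nat \<times> nat \<Rightarrow> nat) \<times> 'a) rel" where
  "opequiv X act m = {(a, b). equivclp (opgen X act m) a b}"

definition PhiX :: "(nat \<Rightarrow> (nat \<Rightarrow> nat \<Rightarrow> nat) \<Rightarrow> 'a \<Rightarrow> 'a) \<Rightarrow> nat
    \<Rightarrow> (nat \<Rightarrow> nat \<times> nat \<Rightarrow> nat) \<times> 'a \<Rightarrow> 'a" where
  "PhiX act m a = act m (\<lambda>i. fst a i \<circ> iota 1) (snd a)"

text \<open>X is a *-module iff Phi is an isomorphism, i.e. a bijection on m-simplices for all m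
  (Phi induced on equivalence classes).\<close>

definition star_module :: "(nat \<Rightarrow> 'a set) \<Rightarrow> (nat \<Rightarrow> (nat \<Rightarrow> nat \<Rightarrow> nat) \<Rightarrow> 'a \<Rightarrow> 'a) \<Rightarrow> bool" where
  "star_module X act \<longleftrightarrow>
     (\<forall>m. bij_betw (\<lambda>c. the_elem (PhiX act m ` c)) (prodX X m // opequiv X act m) (X m))"

end

theory Submission
  imports Defs "HOL-Library.Infinite_Set"
begin

lemma split_inf:
  fixes C :: "nat set"
  assumes "infinite C"
  shows "\<exists>(h::nat\<Rightarrow>nat) (g::nat\<Rightarrow>nat). inj h \<and> inj g \<and> (\<forall>t. t \<notin> C \<longrightarrow> h t = t) \<and> (\<forall>t\<in>C. h t \<in> C)
     \<and> range g \<subseteq> C \<and> range h \<inter> range g = {}"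
proof -
  define e where "e = enumerate C"
  have ie: "inj e" using inj_enumerate[OF assms] e_def by simp
  have bij: "bij_betw e UNIV C" using bij_enumerate[OF assms] e_def by simp
  then have re: "range e = C" by (simp add: bij_betw_def)
  define h where "h t = (if t \<in> C then e (2 * inv e t) else t)" for t
  define g where "g n = e (2*n+1)" for n
  have einv: "e (inv e t) = t" if "t \<in> C" for t using re that by (metis f_inv_into_f)
  have "inj h"
  proof (rule injI)
    fix s t assume st: "h s = h t"
    show "s = t"
    proof (cases "s \<in> C"; cases "t \<in> C")
      assume "s \<in> C" "t \<in> C"
      then have "e (2 * inv e s) = e (2 * inv e t)" using st unfolding h_def by simp
      then have "inv e s = inv e t" using injD[OF ie] by fastforce
      then show ?thesis using einv \<open>s \<in> C\<close> \<open>t \<in> C\<close> by metis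
    next
      assume "s \<in> C" "t \<notin> C"
      then have "e (2 * inv e s) = t" using st unfolding h_def by simp
      then show ?thesis using re \<open>t \<notin> C\<close> by blast
    next
      assume "s \<notin> C" "t \<in> C"
      then have "e (2 * inv e t) = s" using st unfolding h_def by simp
      then show ?thesis using re \<open>s \<notin> C\<close> by blast
    next
      assume "s \<notin> C" "t \<notin> C"
      then show ?thesis using st unfolding h_def by simp
    qed
  qed
  moreover have "inj g" unfolding g_def inj_def by (auto dest: injD[OF ie])
  moreover have "range h \<inter> range g = {}"
  proof -
    { fix s n assume sn: "h s = g n"
      have False
      proof (cases "s \<in> C")
        case True
        then have "e (2 * inv e s) = e (2*n+1)" using sn unfolding h_def g_def by simp
        then have "2 * inv e s = 2*n+1" using injD[OF ie] by blast
        then show False by presburger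
      next
        case False
        then have "s = e (2*n+1)" using sn unfolding h_def g_def by simp
        then show False using re False by blast
      qed }
    then show ?thesis by blast
  qed
  moreover have "range g \<subseteq> C" using re unfolding g_def by auto
  moreover have "\<forall>t\<in>C. h t \<in> C" using re unfolding h_def by auto
  moreover have "\<forall>t. t \<notin> C \<longrightarrow> h t = t" unfolding h_def by simp
  ultimately have "inj h \<and> inj g \<and> (\<forall>t. t \<notin> C \<longrightarrow> h t = t) \<and> (\<forall>t\<in>C. h t \<in> C)
     \<and> range g \<subseteq> C \<and> range h \<inter> range g = {}" by simp
  then show ?thesis by blast
qed

lemma disj_inf:
  fixes U V :: "nat set"
  assumes "infinite U" "infinite V"
  shows "\<exists>T T'. T \<subseteq> U \<and> T' \<subseteq> V \<and> infinite T \<and> infinite T' \<and> T \<inter> T' = {}"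
proof (cases "finite (U \<inter> V)")
  case True
  have "U = (U - V) \<union> (U \<inter> V)" by blast
  then have "infinite (U - V)" using assms(1) True by (metis finite_Un)
  moreover have "V = (V - U) \<union> (U \<inter> V)" by blast
  then have "infinite (V - U)" using assms(2) True by (metis finite_Un)
  ultimately show ?thesis by blast
next
  case False
  define W where "W = U \<inter> V"
  define e where "e = enumerate W"
  have ie: "inj e" using inj_enumerate False W_def e_def by simp
  have ew: "e n \<in> W" for n unfolding e_def by (rule enumerate_in_set) (use False W_def in simp)
  have "inj (\<lambda>n. e (2*n))" by (auto intro!: injI dest: injD[OF ie])
  then have "infinite (range (\<lambda>n. e (2*n)))" by (rule range_inj_infinite)
  moreover have "range (\<lambda>n. e (2*n)) = e ` {n. even n}" by auto
  ultimately have i1: "infinite (e ` {n. even n})" by simp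
  have "inj (\<lambda>n. e (2*n+1))" by (auto intro!: injI dest: injD[OF ie])
  then have "infinite (range (\<lambda>n. e (2*n+1)))" by (rule range_inj_infinite)
  moreover have "range (\<lambda>n. e (2*n+1)) = e ` {n. odd n}"
  proof
    show "range (\<lambda>n. e (2*n+1)) \<subseteq> e ` {n. odd n}" by auto
    show "e ` {n. odd n} \<subseteq> range (\<lambda>n. e (2*n+1))"
    proof
      fix z assume "z \<in> e ` {n. odd n}"
      then obtain n where "odd n" "z = e n" by blast
      then obtain k where "n = 2*k+1" by (metis oddE)
      then show "z \<in> range (\<lambda>n. e (2*n+1))" using \<open>z = e n\<close> by blast
    qed
  qed
  ultimately have i2: "infinite (e ` {n. odd n})" by simp
  have "e ` {n. even n} \<inter> e ` {n. odd n} = {}" using ie by (auto simp: inj_eq)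
  moreover have "e ` {n. even n} \<subseteq> U" "e ` {n. odd n} \<subseteq> V" using ew W_def by auto
  ultimately show ?thesis using i1 i2 by blast
qed


definition splitp :: "nat set \<Rightarrow> (nat \<Rightarrow> nat) \<Rightarrow> (nat \<Rightarrow> nat) \<Rightarrow> bool" where
  "splitp C h g \<longleftrightarrow> inj h \<and> inj g \<and> (\<forall>t. t \<notin> C \<longrightarrow> h t = t) \<and> (\<forall>t\<in>C. h t \<in> C)
     \<and> range g \<subseteq> C \<and> range h \<inter> range g = {}"

lemma split_inf': "infinite (C::nat set) \<Longrightarrow> \<exists>h g. splitp C h g"
  unfolding splitp_def by (rule split_inf)

definition mkF :: "(nat \<Rightarrow> nat \<Rightarrow> nat) \<Rightarrow> (nat \<Rightarrow> nat \<Rightarrow> nat) \<Rightarrow> nat \<Rightarrow> nat \<times> nat \<Rightarrow> nat" where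
  "mkF a b i p = (if fst p = 1 then a i (snd p) else b i (snd p))"

definition vp :: "(nat \<Rightarrow> nat) \<Rightarrow> (nat \<Rightarrow> nat) \<Rightarrow> bool" where
  "vp a b \<longleftrightarrow> inj a \<and> inj b \<and> range a \<inter> range b = {}"

lemma vp_comp: "vp a b \<Longrightarrow> inj u \<Longrightarrow> inj v \<Longrightarrow> vp (a \<circ> u) (b \<circ> v)"
  unfolding vp_def by (auto intro: inj_compose)

lemma mkF_EInj: "\<forall>i\<le>m. vp (a i) (b i) \<Longrightarrow> mkF a b \<in> EInj2 m"
  unfolding EInj2_def
proof (intro CollectI allI impI)
  fix i assume A: "\<forall>i\<le>m. vp (a i) (b i)" and i: "i \<le> m"
  then have v: "vp (a i) (b i)" by blast
  show "inj_on (mkF a b i) two_omega"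
  proof (rule inj_onI)
    fix p q assume p: "p \<in> two_omega" and q: "q \<in> two_omega" and e: "mkF a b i p = mkF a b i q"
    obtain j t where pj: "p = (j,t)" by fastforce
    obtain j' t' where qj: "q = (j',t')" by fastforce
    have jj: "j \<in> {1,2}" "j' \<in> {1,2}" using p q pj qj unfolding two_omega_def by auto
    show "p = q"
    proof (cases "j = 1"; cases "j' = 1")
      assume "j = 1" "j' = 1" then show ?thesis using e v pj qj unfolding mkF_def vp_def by (auto dest: injD)
    next
      assume "j \<noteq> 1" "j' \<noteq> 1" then show ?thesis using e v pj qj jj unfolding mkF_def vp_def by (auto dest: injD)
    next
      assume "j = 1" "j' \<noteq> 1" then show ?thesis using e v pj qj unfolding mkF_def vp_def by auto
    next
      assume "j \<noteq> 1" "j' = 1" then show ?thesis using e v pj qj unfolding mkF_def vp_def by auto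
    qed
  qed
qed

lemma ax_closed: "EM_sset X F act \<Longrightarrow> u \<in> EM n \<Longrightarrow> x \<in> X n \<Longrightarrow> act n u x \<in> X n"
  unfolding EM_sset_def by blast
lemma ax_id: "EM_sset X F act \<Longrightarrow> x \<in> X n \<Longrightarrow> act n (\<lambda>i. id) x = x"
  unfolding EM_sset_def by blast
lemma ax_comp: "EM_sset X F act \<Longrightarrow> u \<in> EM n \<Longrightarrow> v \<in> EM n \<Longrightarrow> x \<in> X n \<Longrightarrow>
   act n u (act n v x) = act n (\<lambda>i. u i \<circ> v i) x"
  unfolding EM_sset_def by blast
lemma ax_cong: "EM_sset X F act \<Longrightarrow> u \<in> EM n \<Longrightarrow> (\<And>i. i \<le> n \<Longrightarrow> u i = u' i) \<Longrightarrow> x \<in> X n \<Longrightarrow>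
   act n u x = act n u' x"
  unfolding EM_sset_def by blast

lemma EM_I: "(\<And>i. i \<le> n \<Longrightarrow> inj (u i)) \<Longrightarrow> u \<in> EM n"
  unfolding EM_def by blast
lemma EM_D: "u \<in> EM n \<Longrightarrow> i \<le> n \<Longrightarrow> inj (u i)"
  unfolding EM_def by blast
lemma EM_id: "(\<lambda>i. id) \<in> EM n" by (rule EM_I) simp

lemma step:
  assumes S: "EM_sset X F act" and V: "\<forall>i\<le>m. vp (a i) (b i)"
    and u1: "u1 \<in> EM m" and u2: "u2 \<in> EM m" and x: "x \<in> X m" and z: "z = act m u1 x"
    and a2: "\<And>i. i \<le> m \<Longrightarrow> a2 i = a i \<circ> u1 i" and b2: "\<And>i. i \<le> m \<Longrightarrow> b2 i = b i \<circ> u2 i"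
  shows "opgen X act m (mkF a b, z) (mkF a2 b2, x)"
proof -
  have V2: "\<forall>i\<le>m. vp (a2 i) (b2 i)" using V a2 b2 vp_comp EM_D[OF u1] EM_D[OF u2] by simp
  have "(mkF a b, z) \<in> prodX X m" unfolding prodX_def using mkF_EInj[OF V] ax_closed[OF S u1 x] z by simp
  moreover have "(mkF a2 b2, x) \<in> prodX X m" unfolding prodX_def using mkF_EInj[OF V2] x by simp
  moreover have "\<forall>i\<le>m. \<forall>p\<in>two_omega. mkF a2 b2 i p = mkF a b i (cop (u1 i) (u2 i) p)"
    using a2 b2 unfolding mkF_def cop_def by (auto split: prod.splits)
  ultimately show ?thesis unfolding opgen_def using u1 u2 z by auto
qed


lemma normalize:
  assumes S: "EM_sset X F act" and A: "(f, x) \<in> prodX X m"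
  shows "\<forall>i\<le>m. vp (f i \<circ> iota 1) (f i \<circ> iota 2)"
    and "opgen X act m (f, x) (mkF (\<lambda>i. f i \<circ> iota 1) (\<lambda>i. f i \<circ> iota 2), x)"
proof -
  have f: "\<forall>i\<le>m. inj_on (f i) two_omega" and x: "x \<in> X m"
    using A unfolding prodX_def EInj2_def by auto
  show V: "\<forall>i\<le>m. vp (f i \<circ> iota 1) (f i \<circ> iota 2)"
  proof (intro allI impI)
    fix i assume "i \<le> m"
    then have fi: "inj_on (f i) two_omega" using f by blast
    have m1: "(1::nat, t) \<in> two_omega" "(2::nat, t) \<in> two_omega" for t unfolding two_omega_def by auto
    show "vp (f i \<circ> iota 1) (f i \<circ> iota 2)" unfolding vp_def
    proof (intro conjI)
      show "inj (f i \<circ> iota 1)" using inj_onD[OF fi _ m1(1) m1(1)] unfolding iota_def by (auto intro!: injI)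
      show "inj (f i \<circ> iota 2)" using inj_onD[OF fi _ m1(2) m1(2)] unfolding iota_def by (auto intro!: injI)
      show "range (f i \<circ> iota 1) \<inter> range (f i \<circ> iota 2) = {}"
        using inj_onD[OF fi _ m1(1) m1(2)] unfolding iota_def by fastforce
    qed
  qed
  have "(mkF (\<lambda>i. f i \<circ> iota 1) (\<lambda>i. f i \<circ> iota 2), x) \<in> prodX X m"
    unfolding prodX_def using mkF_EInj[OF V] x by simp
  moreover have "\<forall>i\<le>m. \<forall>p\<in>two_omega. mkF (\<lambda>i. f i \<circ> iota 1) (\<lambda>i. f i \<circ> iota 2) i p
       = f i (cop ((\<lambda>i. id) i) ((\<lambda>i. id) i) p)"
    unfolding mkF_def cop_def two_omega_def iota_def by auto
  ultimately show "opgen X act m (f, x) (mkF (\<lambda>i. f i \<circ> iota 1) (\<lambda>i. f i \<circ> iota 2), x)"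
    unfolding opgen_def using A EM_id ax_id[OF S x] by (intro conjI; blast?) (rule bexI[of _ "\<lambda>i. id"], rule bexI[of _ "\<lambda>i. id"], auto)
qed


lemma inj_core:
  assumes S: "EM_sset X F act" and V: "\<forall>i\<le>m. vp (a i) (b i)" and V': "\<forall>i\<le>m. vp (a' i) (b' i)"
    and x: "x \<in> X m" and x': "x' \<in> X m" and eq: "act m a x = act m a' x'"
  shows "equivclp (opgen X act m) (mkF a b, x) (mkF a' b', x')"
proof -
  have ex1: "\<forall>i. \<exists>TT. i \<le> m \<longrightarrow> (fst TT \<subseteq> range (b i) \<and> snd TT \<subseteq> range (b' i) \<and> infinite (fst TT)
      \<and> infinite (snd TT) \<and> fst TT \<inter> snd TT = {})"
  proof
    fix i show "\<exists>TT. i \<le> m \<longrightarrow> (fst TT \<subseteq> range (b i) \<and> snd TT \<subseteq> range (b' i) \<and> infinite (fst TT)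
      \<and> infinite (snd TT) \<and> fst TT \<inter> snd TT = {})"
    proof (cases "i \<le> m")
      case True
      then have "inj (b i)" "inj (b' i)" using V V' unfolding vp_def by auto
      then have i1: "infinite (range (b i))" and i2: "infinite (range (b' i))" by (simp_all add: range_inj_infinite)
      obtain T T' where "T \<subseteq> range (b i) \<and> T' \<subseteq> range (b' i) \<and> infinite T \<and> infinite T' \<and> T \<inter> T' = {}"
        using disj_inf[OF i1 i2] by (elim exE) (rule that)
      then show ?thesis by (intro exI[of _ "(T,T')"]) simp
    qed simp
  qed
  obtain TT where TT: "\<forall>i. i \<le> m \<longrightarrow> (fst (TT i) \<subseteq> range (b i) \<and> snd (TT i) \<subseteq> range (b' i) \<and> infinite (fst (TT i))
      \<and> infinite (snd (TT i)) \<and> fst (TT i) \<inter> snd (TT i) = {})" using choice[OF ex1] by blast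
  define T where "T i = fst (TT i)" for i
  define T' where "T' i = snd (TT i)" for i
  have Tb: "T i \<subseteq> range (b i)" and T'b: "T' i \<subseteq> range (b' i)" and Tinf: "infinite (T i)" and T'inf: "infinite (T' i)"
    and TT': "T i \<inter> T' i = {}" if "i \<le> m" for i using TT that unfolding T_def T'_def by auto
  have ex2: "\<forall>i. \<exists>hg. i \<le> m \<longrightarrow> splitp (T i) (fst hg) (fst (snd hg)) \<and> splitp (T' i) (fst (snd (snd hg))) (snd (snd (snd hg)))"
  proof
    fix i show "\<exists>hg. i \<le> m \<longrightarrow> splitp (T i) (fst hg) (fst (snd hg)) \<and> splitp (T' i) (fst (snd (snd hg))) (snd (snd (snd hg)))"
    proof (cases "i \<le> m")
      case True
      obtain h g where "splitp (T i) h g" using split_inf'[OF Tinf[OF True]] by blast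
      moreover obtain h' g' where "splitp (T' i) h' g'" using split_inf'[OF T'inf[OF True]] by blast
      ultimately show ?thesis by (intro exI[of _ "(h, g, h', g')"]) simp
    qed simp
  qed
  obtain HG where HG: "\<forall>i. i \<le> m \<longrightarrow> splitp (T i) (fst (HG i)) (fst (snd (HG i))) \<and> splitp (T' i) (fst (snd (snd (HG i)))) (snd (snd (snd (HG i))))"
    using choice[OF ex2] by blast
  define P where "P i = fst (HG i)" for i
  define Q where "Q i = fst (snd (HG i))" for i
  define P' where "P' i = fst (snd (snd (HG i)))" for i
  define Q' where "Q' i = snd (snd (snd (HG i)))" for i
  have sp: "splitp (T i) (P i) (Q i)" and sp': "splitp (T' i) (P' i) (Q' i)" if "i \<le> m" for i
    using HG that unfolding P_def Q_def P'_def Q'_def by auto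
  define R where "R i = P i \<circ> P' i" for i
  define E where "E i n = (if even n then Q i (n div 2) else Q' i (n div 2))" for i n
  have fixa: "P i \<circ> a i = a i" if "i \<le> m" for i
  proof
    fix t have "a i t \<notin> range (b i)" using V that unfolding vp_def by blast
    then have "a i t \<notin> T i" using Tb[OF that] by blast
    then show "(P i \<circ> a i) t = a i t" using sp[OF that] unfolding splitp_def by simp
  qed
  have fixa': "P' i \<circ> a' i = a' i" if "i \<le> m" for i
  proof
    fix t have "a' i t \<notin> range (b' i)" using V' that unfolding vp_def by blast
    then have "a' i t \<notin> T' i" using T'b[OF that] by blast
    then show "(P' i \<circ> a' i) t = a' i t" using sp'[OF that] unfolding splitp_def by simp
  qed
  have comm: "P' i \<circ> P i = R i" if "i \<le> m" for i
  proof
    fix t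
    have s1: "\<forall>t. t \<notin> T i \<longrightarrow> P i t = t" "\<forall>t\<in>T i. P i t \<in> T i" using sp[OF that] unfolding splitp_def by auto
    have s2: "\<forall>t. t \<notin> T' i \<longrightarrow> P' i t = t" "\<forall>t\<in>T' i. P' i t \<in> T' i" using sp'[OF that] unfolding splitp_def by auto
    have d: "T i \<inter> T' i = {}" using TT'[OF that] .
    show "(P' i \<circ> P i) t = R i t"
    proof (cases "t \<in> T i")
      case True
      then have "P i t \<in> T i" "t \<notin> T' i" using s1 d by auto
      then show ?thesis using s2 d True by (auto simp: R_def)
    next
      case False note F = this
      show ?thesis
      proof (cases "t \<in> T' i")
        case True
        then have "P' i t \<in> T' i" using s2 by auto
        then show ?thesis using s1 d True F by (auto simp: R_def)
      next
        case False then show ?thesis using s1 s2 F by (auto simp: R_def)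
      qed
    qed
  qed
  have injP: "inj (P i)" "inj (Q i)" "inj (P' i)" "inj (Q' i)" if "i \<le> m" for i
    using sp[OF that] sp'[OF that] unfolding splitp_def by auto
  have rQ: "range (Q i) \<subseteq> T i" "range (Q' i) \<subseteq> T' i" if "i \<le> m" for i
    using sp[OF that] sp'[OF that] unfolding splitp_def by auto
  have dPQ: "range (P i) \<inter> range (Q i) = {}" "range (P' i) \<inter> range (Q' i) = {}" if "i \<le> m" for i
    using sp[OF that] sp'[OF that] unfolding splitp_def by auto
  have EMa: "a \<in> EM m" "a' \<in> EM m" "P \<in> EM m" "P' \<in> EM m"
    using V V' injP by (auto intro!: EM_I simp: vp_def)
  define y where "y = act m a x"
  have y: "y \<in> X m" unfolding y_def by (rule ax_closed[OF S EMa(1) x])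
  have y': "y = act m a' x'" using eq y_def by simp
  have yP: "act m P y = y"
  proof -
    have "(\<lambda>i. P i \<circ> a i) \<in> EM m" using EMa by (intro EM_I inj_compose) (auto dest: EM_D)
    then have "act m (\<lambda>i. P i \<circ> a i) x = act m a x" by (rule ax_cong[OF S _ _ x]) (rule fixa)
    then show ?thesis unfolding y_def using ax_comp[OF S EMa(3) EMa(1) x] by simp
  qed
  have yP': "act m P' y = y"
  proof -
    have "(\<lambda>i. P' i \<circ> a' i) \<in> EM m" using EMa by (intro EM_I inj_compose) (auto dest: EM_D)
    then have "act m (\<lambda>i. P' i \<circ> a' i) x' = act m a' x'" by (rule ax_cong[OF S _ _ x']) (rule fixa')
    then show ?thesis unfolding y' using ax_comp[OF S EMa(4) EMa(2) x'] by simp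
  qed
  have vpaQ: "\<forall>i\<le>m. vp (a i) (Q i)" "\<forall>i\<le>m. vp (a' i) (Q' i)"
  proof (safe)
    fix i assume i: "i \<le> m"
    have va: "inj (a i)" "range (a i) \<inter> range (b i) = {}" using V i unfolding vp_def by auto
    have "range (a i) \<inter> range (Q i) = {}" using va(2) rQ(1)[OF i] Tb[OF i] by blast
    then show "vp (a i) (Q i)" using va(1) injP(2)[OF i] unfolding vp_def by simp
    have va': "inj (a' i)" "range (a' i) \<inter> range (b' i) = {}" using V' i unfolding vp_def by auto
    have "range (a' i) \<inter> range (Q' i) = {}" using va'(2) rQ(2)[OF i] T'b[OF i] by blast
    then show "vp (a' i) (Q' i)" using va'(1) injP(4)[OF i] unfolding vp_def by simp
  qed
  have vpPQ: "\<forall>i\<le>m. vp (P i) (Q i)" "\<forall>i\<le>m. vp (P' i) (Q' i)"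
    using injP dPQ unfolding vp_def by auto
  have vpRE: "\<forall>i\<le>m. vp (R i) (E i)"
  proof (safe)
    fix i assume i: "i \<le> m"
    have iR: "inj (R i)" unfolding R_def using injP[OF i] by (simp add: inj_compose)
    have iE: "inj (E i)"
    proof (rule injI)
      fix s t assume st: "E i s = E i t"
      show "s = t"
      proof (cases "even s"; cases "even t")
        assume "even s" "even t"
        then have "Q i (s div 2) = Q i (t div 2)" using st unfolding E_def by simp
        then have "s div 2 = t div 2" using injP(2)[OF i] by (simp add: inj_eq)
        then show ?thesis using \<open>even s\<close> \<open>even t\<close> by (metis dvd_mult_div_cancel)
      next
        assume "odd s" "odd t"
        then have "Q' i (s div 2) = Q' i (t div 2)" using st unfolding E_def by simp
        then have "s div 2 = t div 2" using injP(4)[OF i] by (simp add: inj_eq)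
        then show ?thesis using \<open>odd s\<close> \<open>odd t\<close> by (metis odd_two_times_div_two_succ)
      next
        assume "even s" "odd t"
        then have "Q i (s div 2) = Q' i (t div 2)" using st unfolding E_def by simp
        then show ?thesis using rQ[OF i] TT'[OF i] by blast
      next
        assume "odd s" "even t"
        then have "Q' i (s div 2) = Q i (t div 2)" using st unfolding E_def by simp
        then show ?thesis using rQ[OF i] TT'[OF i] by blast
      qed
    qed
    have "range (R i) \<inter> range (E i) = {}"
    proof -
      { fix t n assume tn: "R i t = E i n"
        have False
        proof (cases "even n")
          case True
          then have "P i (P' i t) = Q i (n div 2)" using tn unfolding R_def E_def by simp
          then show False using dPQ(1)[OF i] by blast
        next
          case False
          then have "P' i (P i t) = Q' i (n div 2)" using tn comm[OF i] unfolding E_def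
            by (metis comp_apply)
          then show False using dPQ(2)[OF i] by blast
        qed }
      then show ?thesis by blast
    qed
    then show "vp (R i) (E i)" using iR iE unfolding vp_def by blast
  qed
  have xid: "x = act m (\<lambda>i. id) x" using ax_id[OF S x] by simp
  have x'id: "x' = act m (\<lambda>i. id) x'" using ax_id[OF S x'] by simp
  have yid: "y = act m (\<lambda>i. id) y" using ax_id[OF S y] by simp
  have invEM: "(\<lambda>i. inv (b i) \<circ> Q i) \<in> EM m" "(\<lambda>i. inv (b' i) \<circ> Q' i) \<in> EM m"
  proof (safe intro!: EM_I)
    fix i assume i: "i \<le> m"
    have "inj_on (inv (b i)) (range (Q i))" using rQ(1)[OF i] Tb[OF i] by (intro inj_on_inv_into) blast
    then show "inj (inv (b i) \<circ> Q i)" using injP(2)[OF i] by (simp add: comp_inj_on)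
    have "inj_on (inv (b' i)) (range (Q' i))" using rQ(2)[OF i] T'b[OF i] by (intro inj_on_inv_into) blast
    then show "inj (inv (b' i) \<circ> Q' i)" using injP(4)[OF i] by (simp add: comp_inj_on)
  qed
  have bQ: "b i \<circ> (inv (b i) \<circ> Q i) = Q i" "b' i \<circ> (inv (b' i) \<circ> Q' i) = Q' i" if i: "i \<le> m" for i
  proof -
    show "b i \<circ> (inv (b i) \<circ> Q i) = Q i"
    proof
      fix t have "Q i t \<in> range (b i)" using rQ(1)[OF i] Tb[OF i] by blast
      then show "(b i \<circ> (inv (b i) \<circ> Q i)) t = Q i t" by (simp add: f_inv_into_f)
    qed
    show "b' i \<circ> (inv (b' i) \<circ> Q' i) = Q' i"
    proof
      fix t have "Q' i t \<in> range (b' i)" using rQ(2)[OF i] T'b[OF i] by blast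
      then show "(b' i \<circ> (inv (b' i) \<circ> Q' i)) t = Q' i t" by (simp add: f_inv_into_f)
    qed
  qed
  have dbl: "(\<lambda>i n. 2 * n) \<in> EM m" "(\<lambda>i n. 2 * n + 1) \<in> EM m" by (auto intro!: EM_I injI)
  have E1: "opgen X act m (mkF a b, x) (mkF a Q, x)"
    by (rule step[OF S V EM_id invEM(1) x, where z=x, OF xid]) (simp_all add: bQ)
  have E2: "opgen X act m (mkF P Q, y) (mkF a Q, x)"
    by (rule step[OF S vpPQ(1) EMa(1) EM_id x, where z=y, OF y_def]) (simp_all add: fixa)
  have E3: "opgen X act m (mkF P Q, y) (mkF R Q, y)"
    by (rule step[OF S vpPQ(1) EMa(4) EM_id y, where z=y, OF yP'[symmetric]]) (simp_all add: R_def)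
  have E4: "opgen X act m (mkF R E, y) (mkF R Q, y)"
    by (rule step[OF S vpRE EM_id dbl(1) y, where z=y, OF yid]) (auto simp: E_def fun_eq_iff)
  have E5: "opgen X act m (mkF R E, y) (mkF R Q', y)"
    by (rule step[OF S vpRE EM_id dbl(2) y, where z=y, OF yid]) (auto simp: E_def fun_eq_iff)
  have E6: "opgen X act m (mkF P' Q', y) (mkF R Q', y)"
    by (rule step[OF S vpPQ(2) EMa(3) EM_id y, where z=y, OF yP[symmetric]]) (simp_all add: comm)
  have E7: "opgen X act m (mkF P' Q', y) (mkF a' Q', x')"
    by (rule step[OF S vpPQ(2) EMa(2) EM_id x', where z=y, OF y']) (simp_all add: fixa')
  have E8: "opgen X act m (mkF a' b', x') (mkF a' Q', x')"
    by (rule step[OF S V' EM_id invEM(2) x', where z=x', OF x'id]) (simp_all add: bQ)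
  have "equivclp (opgen X act m) (mkF a b, x) (mkF a Q, x)" using E1 by (rule r_into_equivclp)
  also have "equivclp (opgen X act m) \<dots> (mkF P Q, y)" using E2 by (rule converse_r_into_equivclp)
  also have "equivclp (opgen X act m) \<dots> (mkF R Q, y)" using E3 by (rule r_into_equivclp)
  also have "equivclp (opgen X act m) \<dots> (mkF R E, y)" using E4 by (rule converse_r_into_equivclp)
  also have "equivclp (opgen X act m) \<dots> (mkF R Q', y)" using E5 by (rule r_into_equivclp)
  also have "equivclp (opgen X act m) \<dots> (mkF P' Q', y)" using E6 by (rule converse_r_into_equivclp)
  also have "equivclp (opgen X act m) \<dots> (mkF a' Q', x')" using E7 by (rule r_into_equivclp)
  also have "equivclp (opgen X act m) \<dots> (mkF a' b', x')" using E8 by (rule converse_r_into_equivclp)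
  finally show ?thesis .
qed


lemma phi_opgen:
  assumes S: "EM_sset X F act" and G: "opgen X act m A B"
  shows "PhiX act m A = PhiX act m B"
proof -
  obtain f z f' x where A: "A = (f, z)" and B: "B = (f', x)" by fastforce
  from G obtain u1 u2 where u1: "u1 \<in> EM m" and u2: "u2 \<in> EM m" and z: "z = act m u1 x"
    and ff: "\<forall>i\<le>m. \<forall>p\<in>two_omega. f' i p = f i (cop (u1 i) (u2 i) p)"
    unfolding opgen_def A B by auto
  have fA: "f \<in> EInj2 m" and x: "x \<in> X m" and fB: "f' \<in> EInj2 m"
    using G unfolding opgen_def prodX_def A B by auto
  have m1: "(1::nat, t) \<in> two_omega" for t unfolding two_omega_def by auto
  have injf: "inj (f i \<circ> iota 1)" if "i \<le> m" for i
  proof -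
    have "inj_on (f i) two_omega" using fA that unfolding EInj2_def by auto
    then show ?thesis using inj_onD[OF _ _ m1 m1] unfolding iota_def by (auto intro!: injI)
  qed
  have e1: "(\<lambda>i. f i \<circ> iota 1) \<in> EM m" using injf by (auto intro!: EM_I)
  have e2: "(\<lambda>i. f i \<circ> iota 1 \<circ> u1 i) \<in> EM m"
  proof (rule EM_I)
    fix i assume i: "i \<le> m"
    show "inj (f i \<circ> iota 1 \<circ> u1 i)" using inj_compose[OF injf[OF i] EM_D[OF u1 i]] .
  qed
  have "PhiX act m A = act m (\<lambda>i. f i \<circ> iota 1) (act m u1 x)" unfolding PhiX_def A z by simp
  also have "\<dots> = act m (\<lambda>i. f i \<circ> iota 1 \<circ> u1 i) x" using ax_comp[OF S e1 u1 x] by simp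
  also have "\<dots> = act m (\<lambda>i. f' i \<circ> iota 1) x"
  proof (rule ax_cong[OF S e2 _ x])
    fix i assume i: "i \<le> m"
    show "f i \<circ> iota 1 \<circ> u1 i = f' i \<circ> iota 1"
    proof
      fix t show "(f i \<circ> iota 1 \<circ> u1 i) t = (f' i \<circ> iota 1) t"
        using ff i m1[of t] unfolding iota_def cop_def by auto
    qed
  qed
  also have "\<dots> = PhiX act m B" unfolding PhiX_def B by simp
  finally show ?thesis .
qed

lemma phi_equivclp:
  assumes S: "EM_sset X F act" and G: "equivclp (opgen X act m) A B"
  shows "PhiX act m A = PhiX act m B"
  using G
proof (induction rule: equivclp_induct)
  case base then show ?case by simp
next
  case (step y z) then show ?case using phi_opgen[OF S] by metis
qed

lemma prodX_equivclp:
  assumes G: "equivclp (opgen X act m) A B" and A: "A \<in> prodX X m"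
  shows "B \<in> prodX X m"
  using G
proof (induction rule: equivclp_induct)
  case base then show ?case using A by simp
next
  case (step y z) then show ?case unfolding opgen_def by blast
qed

lemma phi_closed:
  assumes S: "EM_sset X F act" and A: "A \<in> prodX X m"
  shows "PhiX act m A \<in> X m"
proof -
  obtain f x where Af: "A = (f, x)" by fastforce
  have V: "\<forall>i\<le>m. vp (f i \<circ> iota 1) (f i \<circ> iota 2)" using normalize(1)[OF S A[unfolded Af]] .
  have e1: "(\<lambda>i. f i \<circ> iota 1) \<in> EM m" using V unfolding vp_def by (auto intro!: EM_I)
  have "x \<in> X m" using A Af unfolding prodX_def by auto
  then show ?thesis unfolding Af PhiX_def using ax_closed[OF S e1] by simp
qed

lemma phi_inj:
  assumes S: "EM_sset X F act" and A: "A \<in> prodX X m" and B: "B \<in> prodX X m"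
    and e: "PhiX act m A = PhiX act m B"
  shows "equivclp (opgen X act m) A B"
proof -
  obtain f x where Af: "A = (f, x)" by fastforce
  obtain f' x' where Bf: "B = (f', x')" by fastforce
  have x: "x \<in> X m" and x': "x' \<in> X m" using A B Af Bf unfolding prodX_def by auto
  note V = normalize(1)[OF S A[unfolded Af]] and V' = normalize(1)[OF S B[unfolded Bf]]
  have "equivclp (opgen X act m) A (mkF (\<lambda>i. f i \<circ> iota 1) (\<lambda>i. f i \<circ> iota 2), x)"
    unfolding Af using normalize(2)[OF S A[unfolded Af]] by (rule r_into_equivclp)
  also have "equivclp (opgen X act m) \<dots> (mkF (\<lambda>i. f' i \<circ> iota 1) (\<lambda>i. f' i \<circ> iota 2), x')"
    by (rule inj_core[OF S V V' x x']) (use e in \<open>simp add: Af Bf PhiX_def\<close>)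
  also have "equivclp (opgen X act m) \<dots> B"
    unfolding Bf using normalize(2)[OF S B[unfolded Bf]] by (rule converse_r_into_equivclp)
  finally show ?thesis .
qed


lemma cls:
  assumes S: "EM_sset X F act" and A: "A \<in> prodX X m"
  shows "the_elem (PhiX act m ` (opequiv X act m `` {A})) = PhiX act m A"
proof -
  have "opequiv X act m `` {A} = {B. equivclp (opgen X act m) A B}" unfolding opequiv_def by auto
  moreover have "PhiX act m ` {B. equivclp (opgen X act m) A B} = {PhiX act m A}"
  proof
    show "PhiX act m ` {B. equivclp (opgen X act m) A B} \<subseteq> {PhiX act m A}"
      using phi_equivclp[OF S, of m A] by auto
    have "A \<in> {B. equivclp (opgen X act m) A B}" by simp
    then show "{PhiX act m A} \<subseteq> PhiX act m ` {B. equivclp (opgen X act m) A B}" by blast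
  qed
  ultimately show ?thesis by simp
qed

lemma star_iff:
  assumes S: "EM_sset X F act"
  shows "star_module X act \<longleftrightarrow> (\<forall>m. \<forall>y\<in>X m. \<exists>A\<in>prodX X m. PhiX act m A = y)"
proof
  assume sm: "star_module X act"
  show "\<forall>m. \<forall>y\<in>X m. \<exists>A\<in>prodX X m. PhiX act m A = y"
  proof (intro allI ballI)
    fix m y assume y: "y \<in> X m"
    have "bij_betw (\<lambda>c. the_elem (PhiX act m ` c)) (prodX X m // opequiv X act m) (X m)"
      using sm unfolding star_module_def by blast
    then have "y \<in> (\<lambda>c. the_elem (PhiX act m ` c)) ` (prodX X m // opequiv X act m)"
      using y unfolding bij_betw_def by simp
    then obtain c where c: "c \<in> prodX X m // opequiv X act m" and yc: "y = the_elem (PhiX act m ` c)" by blast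
    from c obtain A where A: "A \<in> prodX X m" and cA: "c = opequiv X act m `` {A}" by (rule quotientE)
    show "\<exists>A\<in>prodX X m. PhiX act m A = y" using A cls[OF S A] yc cA by metis
  qed
next
  assume su: "\<forall>m. \<forall>y\<in>X m. \<exists>A\<in>prodX X m. PhiX act m A = y"
  show "star_module X act" unfolding star_module_def
  proof
    fix m
    let ?r = "opequiv X act m"
    let ?g = "\<lambda>c. the_elem (PhiX act m ` c)"
    have cl: "?r `` {A} = {B. equivclp (opgen X act m) A B}" for A unfolding opequiv_def by auto
    show "bij_betw ?g (prodX X m // ?r) (X m)" unfolding bij_betw_def
    proof
      show "inj_on ?g (prodX X m // ?r)"
      proof (rule inj_onI)
        fix c1 c2 assume c1: "c1 \<in> prodX X m // ?r" and c2: "c2 \<in> prodX X m // ?r" and e: "?g c1 = ?g c2"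
        from c1 obtain A1 where A1: "A1 \<in> prodX X m" and cA1: "c1 = ?r `` {A1}" by (rule quotientE)
        from c2 obtain A2 where A2: "A2 \<in> prodX X m" and cA2: "c2 = ?r `` {A2}" by (rule quotientE)
        have "PhiX act m A1 = PhiX act m A2" using e cls[OF S A1] cls[OF S A2] cA1 cA2 by simp
        then have q: "equivclp (opgen X act m) A1 A2" by (rule phi_inj[OF S A1 A2])
        have "{B. equivclp (opgen X act m) A1 B} = {B. equivclp (opgen X act m) A2 B}"
          using q equivclp_trans equivclp_sym by metis
        then show "c1 = c2" using cA1 cA2 cl by simp
      qed
      show "?g ` (prodX X m // ?r) = X m"
      proof
        show "?g ` (prodX X m // ?r) \<subseteq> X m"
        proof
          fix y assume "y \<in> ?g ` (prodX X m // ?r)"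
          then obtain c where c: "c \<in> prodX X m // ?r" and yc: "y = ?g c" by blast
          from c obtain A where A: "A \<in> prodX X m" and cA: "c = ?r `` {A}" by (rule quotientE)
          show "y \<in> X m" using yc cA cls[OF S A] phi_closed[OF S A] by simp
        qed
        show "X m \<subseteq> ?g ` (prodX X m // ?r)"
        proof
          fix y assume y: "y \<in> X m"
          then obtain A where A: "A \<in> prodX X m" and yA: "PhiX act m A = y" using su by blast
          have "?r `` {A} \<in> prodX X m // ?r" using A by (rule quotientI)
          moreover have "?g (?r `` {A}) = y" using cls[OF S A] yA by simp
          ultimately show "y \<in> ?g ` (prodX X m // ?r)" by (metis imageI)
        qed
      qed
    qed
  qed
qed

lemma supp_prod:
  assumes S: "EM_sset X F act" and y: "y \<in> X m" and h: "\<And>k. k \<le> m \<Longrightarrow> inj (h k)"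
    and fix1: "\<And>k. k \<le> m \<Longrightarrow> act m (\<lambda>i. if i = k then h k else id) y = y"
  shows "act m h y = y"
proof -
  have "j \<le> Suc m \<Longrightarrow> act m (\<lambda>i. if i < j then h i else id) y = y" for j
  proof (induction j)
    case 0
    have e: "(\<lambda>i. if i < (0::nat) then h i else id) = (\<lambda>i. id)" by (simp add: fun_eq_iff)
    show ?case by (subst e) (rule ax_id[OF S y])
  next
    case (Suc j)
    then have jm: "j \<le> m" by simp
    have e1: "(\<lambda>i. if i < j then h i else id) \<in> EM m" using h by (auto intro!: EM_I)
    have e2: "(\<lambda>i. if i = j then h j else id) \<in> EM m" using h jm by (auto intro!: EM_I)
    have fe: "(\<lambda>i. if i < Suc j then h i else id) = (\<lambda>i. (if i < j then h i else id) \<circ> (if i = j then h j else id))"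
      by (auto simp: fun_eq_iff)
    have "act m (\<lambda>i. if i < Suc j then h i else id) y
        = act m (\<lambda>i. if i < j then h i else id) (act m (\<lambda>i. if i = j then h j else id) y)"
      unfolding fe using ax_comp[OF S e1 e2 y] by simp
    also have "\<dots> = y" using fix1[OF jm] Suc by simp
    finally show ?case .
  qed
  then have a: "act m (\<lambda>i. if i < Suc m then h i else id) y = y" by simp
  have e: "(\<lambda>i. if i < Suc m then h i else id) \<in> EM m" using h by (auto intro!: EM_I)
  have "act m (\<lambda>i. if i < Suc m then h i else id) y = act m h y"
    by (rule ax_cong[OF S e _ y]) simp
  then show ?thesis using a by simp
qed

lemma surj_mild:
  assumes S: "EM_sset X F act" and M: "mild X act" and y: "y \<in> X m"
  shows "\<exists>A\<in>prodX X m. PhiX act m A = y"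
proof -
  have "\<forall>k. \<exists>A. k \<le> m \<longrightarrow> infinite (UNIV - A) \<and> k_supported act m k A y"
    using M y unfolding mild_def by blast
  then obtain AA where AA: "\<And>k. k \<le> m \<Longrightarrow> infinite (UNIV - AA k) \<and> k_supported act m k (AA k) y"
    by metis
  have ex2: "\<forall>k. \<exists>hg. k \<le> m \<longrightarrow> splitp (UNIV - AA k) (fst hg) (snd hg)"
  proof
    fix k show "\<exists>hg. k \<le> m \<longrightarrow> splitp (UNIV - AA k) (fst hg) (snd hg)"
    proof (cases "k \<le> m")
      case True
      obtain h g where "splitp (UNIV - AA k) h g" using split_inf' AA[OF True] by blast
      then show ?thesis by (intro exI[of _ "(h, g)"]) simp
    qed simp
  qed
  obtain HG where HG: "\<forall>k. k \<le> m \<longrightarrow> splitp (UNIV - AA k) (fst (HG k)) (snd (HG k))"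
    using choice[OF ex2] by blast
  define h where "h k = fst (HG k)" for k
  define g where "g k = snd (HG k)" for k
  have sp: "splitp (UNIV - AA k) (h k) (g k)" if "k \<le> m" for k using HG that unfolding h_def g_def by auto
  have V: "\<forall>k\<le>m. vp (h k) (g k)" using sp unfolding splitp_def vp_def by auto
  have hy: "act m h y = y"
  proof (rule supp_prod[OF S y])
    fix k assume k: "k \<le> m"
    show "inj (h k)" using sp[OF k] unfolding splitp_def by simp
    have "\<forall>t\<in>AA k. h k t = t" using sp[OF k] unfolding splitp_def by simp
    then show "act m (\<lambda>i. if i = k then h k else id) y = y"
      using AA[OF k] \<open>inj (h k)\<close> unfolding k_supported_def by blast
  qed
  have A: "(mkF h g, y) \<in> prodX X m" unfolding prodX_def using mkF_EInj[OF V] y by simp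
  have "(\<lambda>i. mkF h g i \<circ> iota 1) = h" by (auto simp: fun_eq_iff mkF_def iota_def)
  then have "PhiX act m (mkF h g, y) = y" unfolding PhiX_def using hy by simp
  then show ?thesis using A by blast
qed

lemma mild_surj:
  assumes S: "EM_sset X F act" and su: "\<forall>m. \<forall>y\<in>X m. \<exists>A\<in>prodX X m. PhiX act m A = y"
  shows "mild X act"
  unfolding mild_def
proof (intro allI ballI impI)
  fix n y k assume y: "y \<in> X n" and k: "k \<le> n"
  obtain A where A: "A \<in> prodX X n" and yA: "PhiX act n A = y" using su y by blast
  obtain f x where Af: "A = (f, x)" by fastforce
  have x: "x \<in> X n" using A Af unfolding prodX_def by auto
  note V = normalize(1)[OF S A[unfolded Af]]
  define a where "a i = f i \<circ> iota 1" for i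
  have ea: "a \<in> EM n" using V unfolding vp_def a_def by (auto intro!: EM_I)
  have ya: "y = act n a x" using yA unfolding Af PhiX_def a_def by simp
  have vk: "vp (a k) (f k \<circ> iota 2)" using V k unfolding a_def by simp
  have "inj (f k \<circ> iota 2)" using vk unfolding vp_def by simp
  then have "infinite (range (f k \<circ> iota 2))" by (rule range_inj_infinite)
  moreover have "range (f k \<circ> iota 2) \<subseteq> UNIV - range (a k)" using vk unfolding vp_def by blast
  ultimately have inf: "infinite (UNIV - range (a k))" using finite_subset by blast
  have "k_supported act n k (range (a k)) y" unfolding k_supported_def
  proof (intro allI impI)
    fix u assume u: "inj u \<and> (\<forall>t\<in>range (a k). u t = t)"
    have eu: "(\<lambda>i. if i = k then u else id) \<in> EM n" using u by (auto intro!: EM_I)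
    have ec: "(\<lambda>i. (if i = k then u else id) \<circ> a i) \<in> EM n"
      using u EM_D[OF ea] by (auto intro!: EM_I inj_compose)
    have "act n (\<lambda>i. if i = k then u else id) y = act n (\<lambda>i. (if i = k then u else id) \<circ> a i) x"
      unfolding ya using ax_comp[OF S eu ea x] by simp
    also have "\<dots> = act n a x"
    proof (rule ax_cong[OF S ec _ x])
      fix i assume "i \<le> n"
      show "(if i = k then u else id) \<circ> a i = a i" using u by (auto simp: fun_eq_iff)
    qed
    finally show "act n (\<lambda>i. if i = k then u else id) y = y" using ya by simp
  qed
  then show "\<exists>A. infinite (UNIV - A) \<and> k_supported act n k A y" using inf by blast
qed

theorem theorem2p24:
  fixes X :: "nat \<Rightarrow> 'a set"
    and F :: "nat \<Rightarrow> nat \<Rightarrow> (nat \<Rightarrow> nat) \<Rightarrow> 'a \<Rightarrow> 'a"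
    and act :: "nat \<Rightarrow> (nat \<Rightarrow> nat \<Rightarrow> nat) \<Rightarrow> 'a \<Rightarrow> 'a"
  assumes "EM_sset X F act"
  shows "star_module X act \<longleftrightarrow> mild X act"
  using star_iff[OF assms] surj_mild[OF assms] mild_surj[OF assms] by blast

end
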